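(* Let $G$ be a compact matrix Lie group of $n\times n$ unitary matrices with normalized Haar measure $\eta$, let $\epsilon>0$, and let $X=\{x_1,\dots,x_N\}\subset\mathbb{C}^n$ satisfy $x_i\neq x_j$ for $i\neq j$ and $Ax_i\neq x_i$ for all $i$ and all $A\in G$ with $A\neq I$. Let $t$ be a positive integer and let $P^t_{ij}$ be as in the context. Suppose $x_j=Q\cdot x_i$ for some $Q\in G$. Then for all $k,r\in[N]$ and $R\in G$, $$\int_G P^t_{ik}(I,C)\,P^t_{ir}(I,CR)\,d\eta(C)=\int_G P^t_{jk}(I,C)\,P^t_{jr}(I,CR)\,d\eta(C),$$ i.e. $P^t_{i,\cdot}(I,\cdot)\circledast P^t_{i,\cdot}(I,\cdot)=P^t_{j,\cdot}(I,\cdot)\circledast P^t_{j,\cdot}(I,\cdot)$ as functions on $[N]^2\times G$.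
   Context: $[N]=\{1,\dots,N\}$. $W_{ij}(A,B)=e^{-\|Ax_i-Bx_j\|^2/\epsilon}$; $D_{ii}=\sum_{j=1}^N\int_G W_{ij}(I,C)\,d\eta(C)$; $P_{ij}(A,B)=W_{ij}(A,B)/D_{ii}$. $P^1_{ij}=P_{ij}$ and $P^t_{ij}(A,B)=\sum_{k=1}^N\int_G P^{t-1}_{ik}(A,C)P_{kj}(C,B)\,d\eta(C)$ for $t\ge2$. For functions $f,g$ on $[N]\times G$ (written $f(k,C)=f_k(C)$), $f\circledast g$ is the function on $[N]^2\times G$ given by $(f\circledast g)(k,r,R)=\int_G f_k(C)\,g_r(CR)\,d\eta(C)$; $P^t_{i,\cdot}(I,\cdot)$ denotes $(k,C)\mapsto P^t_{ik}(I,C)$. *)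

theory Defs
  imports "HOL-Analysis.Analysis" "HOL-Probability.Probability"
begin

type_synonym 'n cmat = "complex ^ 'n ^ 'n"

definition ctrans :: "'n::finite cmat \<Rightarrow> 'n cmat" where
  "ctrans A = (\<chi> i j. cnj (A $ j $ i))"

definition unitary_mat :: "'n::finite cmat \<Rightarrow> bool" where
  "unitary_mat A \<longleftrightarrow> A ** ctrans A = mat 1 \<and> ctrans A ** A = mat 1"

text \<open>A compact matrix Lie group of unitary matrices: a compact subgroup of U(n)
  (closed subgroups of U(n) are Lie groups by Cartan's theorem).\<close>
definition compact_unitary_group :: "'n::finite cmat set \<Rightarrow> bool" where
  "compact_unitary_group G \<longleftrightarrow>
     G \<subseteq> {A. unitary_mat A} \<and> mat 1 \<in> G \<and>
     (\<forall>A\<in>G. \<forall>B\<in>G. A ** B \<in> G) \<and> (\<forall>A\<in>G. ctrans A \<in> G) \<and> compact G"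

text \<open>Normalized Haar measure on a compact group (bi-invariant, since compact
  groups are unimodular).\<close>
definition normalized_haar :: "'n::finite cmat set \<Rightarrow> 'n cmat measure \<Rightarrow> bool" where
  "normalized_haar G \<eta> \<longleftrightarrow>
     prob_space \<eta> \<and> space \<eta> = G \<and> sets \<eta> = sets (restrict_space borel G) \<and>
     (\<forall>A\<in>G. distr \<eta> \<eta> (\<lambda>C. A ** C) = \<eta>) \<and>
     (\<forall>A\<in>G. distr \<eta> \<eta> (\<lambda>C. C ** A) = \<eta>)"

definition Wk :: "real \<Rightarrow> (nat \<Rightarrow> complex ^ 'n) \<Rightarrow> nat \<Rightarrow> nat \<Rightarrow> 'n::finite cmat \<Rightarrow> 'n cmat \<Rightarrow> real" where
  "Wk \<epsilon> x i j A B = exp (- (norm (A *v x i - B *v x j))\<^sup>2 / \<epsilon>)"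

definition Dg :: "'n::finite cmat measure \<Rightarrow> real \<Rightarrow> nat \<Rightarrow> (nat \<Rightarrow> complex ^ 'n) \<Rightarrow> nat \<Rightarrow> real" where
  "Dg \<eta> \<epsilon> N x i = (\<Sum>j\<in>{1..N}. \<integral>C. Wk \<epsilon> x i j (mat 1) C \<partial>\<eta>)"

definition Pk :: "'n::finite cmat measure \<Rightarrow> real \<Rightarrow> nat \<Rightarrow> (nat \<Rightarrow> complex ^ 'n)
    \<Rightarrow> nat \<Rightarrow> nat \<Rightarrow> 'n cmat \<Rightarrow> 'n cmat \<Rightarrow> real" where
  "Pk \<eta> \<epsilon> N x i j A B = Wk \<epsilon> x i j A B / Dg \<eta> \<epsilon> N x i"

text \<open>Ppow eta eps N x t is $P^t$ for $t \<ge> 1$ (the value at t = 0 is irrelevant).\<close>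
fun Ppow :: "'n::finite cmat measure \<Rightarrow> real \<Rightarrow> nat \<Rightarrow> (nat \<Rightarrow> complex ^ 'n)
    \<Rightarrow> nat \<Rightarrow> nat \<Rightarrow> nat \<Rightarrow> 'n cmat \<Rightarrow> 'n cmat \<Rightarrow> real" where
  "Ppow \<eta> \<epsilon> N x 0 i j A B = 0"
| "Ppow \<eta> \<epsilon> N x (Suc 0) i j A B = Pk \<eta> \<epsilon> N x i j A B"
| "Ppow \<eta> \<epsilon> N x (Suc (Suc t)) i j A B =
     (\<Sum>k\<in>{1..N}. \<integral>C. Ppow \<eta> \<epsilon> N x (Suc t) i k A C * Pk \<eta> \<epsilon> N x k j C B \<partial>\<eta>)"

definition gconv :: "'n::finite cmat measure \<Rightarrow> (nat \<Rightarrow> 'n cmat \<Rightarrow> real)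
    \<Rightarrow> (nat \<Rightarrow> 'n cmat \<Rightarrow> real) \<Rightarrow> nat \<Rightarrow> nat \<Rightarrow> 'n cmat \<Rightarrow> real" where
  "gconv \<eta> f g k r R = (\<integral>C. f k C * g r (C ** R) \<partial>\<eta>)"

end

theory Submission imports Defs begin

lemma cont_lmul: "continuous_on UNIV (\<lambda>C::'n::finite cmat. U ** C)"
  unfolding matrix_matrix_mult_def
  by (intro continuous_intros)

lemma meas_lmul:
  assumes G: "compact_unitary_group G" and H: "normalized_haar G \<eta>" and U: "U \<in> G"
  shows "(\<lambda>C. U ** C) \<in> measurable \<eta> \<eta>"
proof -
  have "(\<lambda>C. U ** C) \<in> measurable (restrict_space borel G) (restrict_space borel G)"
    apply (rule measurable_restrict_space3)
    apply (rule borel_measurable_continuous_onI[OF cont_lmul])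
    using G U unfolding compact_unitary_group_def by auto
  then show ?thesis using H unfolding normalized_haar_def
    by (metis measurable_cong_sets)
qed

lemma unitary_norm:
  assumes "unitary_mat Q"
  shows "norm (Q *v v) = norm (v::complex^'n::finite)"
proof -
  have id: "(\<Sum>i\<in>UNIV. cnj (Q$i$k) * Q$i$l) = (if k = l then 1 else 0)" for k l
  proof -
    have "(ctrans Q ** Q) $ k $ l = (mat 1 :: complex^'n^'n) $ k $ l"
      using assms unfolding unitary_mat_def by simp
    then show ?thesis unfolding ctrans_def matrix_matrix_mult_def mat_def by simp
  qed
  have sq: "complex_of_real ((norm w)\<^sup>2) = (\<Sum>i\<in>UNIV. w$i * cnj (w$i))" for w :: "complex^'n"
  proof -
    have "(norm w)\<^sup>2 = (\<Sum>i\<in>UNIV. (norm (w$i))\<^sup>2)"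
      unfolding norm_vec_def L2_set_def by (simp add: sum_nonneg)
    then have "complex_of_real ((norm w)\<^sup>2) = (\<Sum>i\<in>UNIV. complex_of_real ((norm (w$i))\<^sup>2))"
      by (simp only: of_real_sum)
    then show ?thesis by (simp only: complex_norm_square)
  qed
  have "(\<Sum>i\<in>UNIV. (Q *v v)$i * cnj ((Q *v v)$i))
      = (\<Sum>i\<in>UNIV. (\<Sum>k\<in>UNIV. Q$i$k * v$k) * (\<Sum>l\<in>UNIV. cnj (Q$i$l) * cnj (v$l)))"
    unfolding matrix_vector_mult_def by (simp add: cnj_sum)
  also have "\<dots> = (\<Sum>i\<in>UNIV. \<Sum>k\<in>UNIV. \<Sum>l\<in>UNIV. cnj (Q$i$l) * Q$i$k * (v$k * cnj (v$l)))"
    by (simp add: sum_product mult_ac)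
  also have "\<dots> = (\<Sum>k\<in>UNIV. \<Sum>l\<in>UNIV. (\<Sum>i\<in>UNIV. cnj (Q$i$l) * Q$i$k) * (v$k * cnj (v$l)))"
    proof -
      have "(\<Sum>i\<in>UNIV. \<Sum>k\<in>UNIV. \<Sum>l\<in>UNIV. cnj (Q$i$l) * Q$i$k * (v$k * cnj (v$l)))
          = (\<Sum>k\<in>UNIV. \<Sum>i\<in>UNIV. \<Sum>l\<in>UNIV. cnj (Q$i$l) * Q$i$k * (v$k * cnj (v$l)))"
        by (rule sum.swap)
      also have "\<dots> = (\<Sum>k\<in>UNIV. \<Sum>l\<in>UNIV. \<Sum>i\<in>UNIV. cnj (Q$i$l) * Q$i$k * (v$k * cnj (v$l)))"
        by (rule sum.cong[OF refl], rule sum.swap)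
      finally show ?thesis by (simp only: sum_distrib_right)
    qed
  also have "\<dots> = (\<Sum>k\<in>UNIV. v$k * cnj (v$k))"
    by (simp add: id if_distrib[where f="\<lambda>z. z * _"] sum.delta cong: if_cong)
  finally have "complex_of_real ((norm (Q *v v))\<^sup>2) = complex_of_real ((norm v)\<^sup>2)"
    by (simp only: sq)
  then have "(norm (Q *v v))\<^sup>2 = (norm v)\<^sup>2" using of_real_eq_iff by blast
  then show ?thesis by (simp add: power2_eq_iff_nonneg)
qed


lemma G_unitary: "compact_unitary_group G \<Longrightarrow> U \<in> G \<Longrightarrow> unitary_mat U"
  unfolding compact_unitary_group_def by auto

lemma G_ctrans: "compact_unitary_group G \<Longrightarrow> U \<in> G \<Longrightarrow> ctrans U \<in> G"
  unfolding compact_unitary_group_def by auto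

lemma haar_subst:
  assumes G: "compact_unitary_group G" and H: "normalized_haar G \<eta>" and U: "U \<in> G"
  shows "(\<integral>C. f (U ** C) \<partial>\<eta>) = (\<integral>C. (f C :: real) \<partial>\<eta>)"
proof cases
  assume f: "f \<in> borel_measurable \<eta>"
  have "(\<integral>C. f C \<partial>\<eta>) = (\<integral>C. f C \<partial>(distr \<eta> \<eta> (\<lambda>C. U ** C)))"
    using H U unfolding normalized_haar_def by simp
  also have "\<dots> = (\<integral>C. f (U ** C) \<partial>\<eta>)"
    by (rule integral_distr[OF meas_lmul[OF G H U] f])
  finally show ?thesis by simp
next
  assume nf: "f \<notin> borel_measurable \<eta>"
  have nm: "(\<lambda>C. f (U ** C)) \<notin> borel_measurable \<eta>"
  proof
    assume m: "(\<lambda>C. f (U ** C)) \<in> borel_measurable \<eta>"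
    have "(\<lambda>C. f (U ** (ctrans U ** C))) \<in> borel_measurable \<eta>"
      using measurable_compose[OF meas_lmul[OF G H G_ctrans[OF G U]] m] by simp
    moreover have eq: "U ** (ctrans U ** C) = C" for C
      using G_unitary[OF G U] unfolding unitary_mat_def by (simp add: matrix_mul_assoc)
    have "(\<lambda>C. f (U ** (ctrans U ** C))) = f" unfolding eq by (rule refl)
    ultimately show False using nf by simp
  qed
  show ?thesis
    using nf nm borel_measurable_integrable not_integrable_integral_eq by metis
qed

lemma Wk_inv:
  assumes "unitary_mat U"
  shows "Wk \<epsilon> x m k (U ** C) (U ** B) = Wk \<epsilon> x m k C B"
proof -
  have "(U ** C) *v x m - (U ** B) *v x k = U *v (C *v x m - B *v x k)"
    by (simp add: matrix_vector_mul_assoc[symmetric] matrix_vector_mult_diff_distrib)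
  then show ?thesis unfolding Wk_def using unitary_norm[OF assms] by simp
qed

lemma Pk_inv:
  assumes "unitary_mat U"
  shows "Pk \<eta> \<epsilon> N x m k (U ** C) (U ** B) = Pk \<eta> \<epsilon> N x m k C B"
  unfolding Pk_def using Wk_inv[OF assms] by simp

lemma Ppow_shift:
  assumes G: "compact_unitary_group G" and H: "normalized_haar G \<eta>" and Q: "Q \<in> G"
    and xj: "x j = Q *v x i"
  shows "Ppow \<eta> \<epsilon> N x (Suc t) j k (mat 1) B = Ppow \<eta> \<epsilon> N x (Suc t) i k (mat 1) (ctrans Q ** B)"
proof -
  have uQ: "unitary_mat Q" by (rule G_unitary[OF G Q])
  have uQ': "unitary_mat (ctrans Q)" by (rule G_unitary[OF G G_ctrans[OF G Q]])
  have W: "Wk \<epsilon> x j k (mat 1) C = Wk \<epsilon> x i k (mat 1) (ctrans Q ** C)" for k C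
  proof -
    have "Wk \<epsilon> x i k (mat 1) (ctrans Q ** C) = Wk \<epsilon> x i k (Q ** mat 1) (Q ** (ctrans Q ** C))"
      by (rule Wk_inv[OF uQ, symmetric])
    also have "Q ** (ctrans Q ** C) = C"
      using uQ unfolding unitary_mat_def by (simp add: matrix_mul_assoc)
    finally have "Wk \<epsilon> x i k (mat 1) (ctrans Q ** C) = Wk \<epsilon> x i k Q C" by simp
    then show ?thesis unfolding Wk_def xj by (simp, metis)
  qed
  have D: "Dg \<eta> \<epsilon> N x j = Dg \<eta> \<epsilon> N x i"
    unfolding Dg_def W haar_subst[OF G H G_ctrans[OF G Q]] ..
  have P: "Pk \<eta> \<epsilon> N x j k (mat 1) C = Pk \<eta> \<epsilon> N x i k (mat 1) (ctrans Q ** C)" for k C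
    unfolding Pk_def W D ..
  show ?thesis
  proof (induction t arbitrary: k B)
    case 0
    then show ?case using P by simp
  next
    case (Suc t)
    have "Ppow \<eta> \<epsilon> N x (Suc (Suc t)) j k (mat 1) B
        = (\<Sum>m\<in>{1..N}. \<integral>C. Ppow \<eta> \<epsilon> N x (Suc t) i m (mat 1) (ctrans Q ** C)
              * Pk \<eta> \<epsilon> N x m k (ctrans Q ** C) (ctrans Q ** B) \<partial>\<eta>)"
      by (simp add: Suc.IH Pk_inv[OF uQ'])
    also have "\<dots> = (\<Sum>m\<in>{1..N}. \<integral>C. Ppow \<eta> \<epsilon> N x (Suc t) i m (mat 1) C
              * Pk \<eta> \<epsilon> N x m k C (ctrans Q ** B) \<partial>\<eta>)"
      by (rule sum.cong[OF refl], rule haar_subst[OF G H G_ctrans[OF G Q]])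
    finally show ?case by simp
  qed
qed

theorem proposition2:
  fixes G :: "'n::finite cmat set" and \<eta> :: "'n cmat measure"
    and \<epsilon> :: real and N :: nat and x :: "nat \<Rightarrow> complex ^ 'n"
    and t i j :: nat and Q :: "'n cmat"
  assumes "compact_unitary_group G"
    and "normalized_haar G \<eta>"
    and "\<epsilon> > 0"
    and "\<forall>a\<in>{1..N}. \<forall>b\<in>{1..N}. a \<noteq> b \<longrightarrow> x a \<noteq> x b"
    and "\<forall>a\<in>{1..N}. \<forall>A\<in>G. A \<noteq> mat 1 \<longrightarrow> A *v x a \<noteq> x a"
    and "t \<ge> 1"
    and "i \<in> {1..N}" and "j \<in> {1..N}"
    and "Q \<in> G" and "x j = Q *v x i"
  shows "\<forall>k\<in>{1..N}. \<forall>r\<in>{1..N}. \<forall>R\<in>G.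
           gconv \<eta> (\<lambda>k C. Ppow \<eta> \<epsilon> N x t i k (mat 1) C) (\<lambda>k C. Ppow \<eta> \<epsilon> N x t i k (mat 1) C) k r R
         = gconv \<eta> (\<lambda>k C. Ppow \<eta> \<epsilon> N x t j k (mat 1) C) (\<lambda>k C. Ppow \<eta> \<epsilon> N x t j k (mat 1) C) k r R"
proof (intro ballI)
  fix k r R
  obtain s where t: "t = Suc s" using assms(6) by (cases t) auto
  have sh: "Ppow \<eta> \<epsilon> N x (Suc s) j m (mat 1) B = Ppow \<eta> \<epsilon> N x (Suc s) i m (mat 1) (ctrans Q ** B)" for m B
    by (rule Ppow_shift[OF assms(1,2,9,10)])
  have "gconv \<eta> (\<lambda>k C. Ppow \<eta> \<epsilon> N x t j k (mat 1) C) (\<lambda>k C. Ppow \<eta> \<epsilon> N x t j k (mat 1) C) k r R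
      = (\<integral>C. Ppow \<eta> \<epsilon> N x (Suc s) i k (mat 1) (ctrans Q ** C)
             * Ppow \<eta> \<epsilon> N x (Suc s) i r (mat 1) ((ctrans Q ** C) ** R) \<partial>\<eta>)"
    unfolding gconv_def t sh by (simp add: matrix_mul_assoc)
  also have "\<dots> = (\<integral>C. Ppow \<eta> \<epsilon> N x (Suc s) i k (mat 1) C
             * Ppow \<eta> \<epsilon> N x (Suc s) i r (mat 1) (C ** R) \<partial>\<eta>)"
    by (rule haar_subst[OF assms(1,2) G_ctrans[OF assms(1,9)]])
  finally show "gconv \<eta> (\<lambda>k C. Ppow \<eta> \<epsilon> N x t i k (mat 1) C) (\<lambda>k C. Ppow \<eta> \<epsilon> N x t i k (mat 1) C) k r R
         = gconv \<eta> (\<lambda>k C. Ppow \<eta> \<epsilon> N x t j k (mat 1) C) (\<lambda>k C. Ppow \<eta> \<epsilon> N x t j k (mat 1) C) k r R"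
    unfolding gconv_def t by simp
qed

end
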